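(* The language $L_5=\{\omega\in\{a,b,c\}^*:\ \text{exactly one of } |\omega|_a=|\omega|_b \text{ and } |\omega|_a=|\omega|_c \text{ holds}\}$ is recognized by some QPA with probability $\frac47$: there is a QPA which accepts every $x\in L_5$ with probability at least $\frac47$ and rejects every $x\in\{a,b,c\}^*\setminus L_5$ with probability at least $\frac47$.
   Context: $|\omega|_i$ denotes the number of occurrences of the symbol $i$ in $\omega$. A QPA is a tuple $A=(Q,\Sigma,T,q_0,Q_a,Q_r,\delta)$ with $Q$ a finite set of states, $\Sigma$ a finite input alphabet, $T$ a finite stack alphabet, $q_0\in Q$, $Q_a,Q_r\subset Q$ disjoint, $\Gamma=\Sigma\cup\{\#,\$\}$ (end-markers), $\Delta=T\cup\{Z_0\}$ ($Z_0\notin T$ the stack base symbol), and $\delta:Q\times\Gamma\times\Delta\times Q\times\{\downarrow,\to\}\times\Delta^*\to\mathbb{C}$ such that whenever $\delta(q,\alpha,\beta,q',d,\omega)\ne0$: $|\omega|\le2$; if $|\omega|=2$ then $\omega_1=\beta$; if $\beta=Z_0$ then $\omega\in Z_0T^*$; if $\beta\ne Z_0$ then $\omega\in T^*$; and such that the evolution operator $U_A$ is unitary. A configuration is $|\nu_i q_j\nu_k,\omega_l\rangle$ with $q_j\in Q$, $\nu_i\nu_k\in\#\Sigma^*\$$, input head on the first symbol of $\nu_k$, $\omega_l\in Z_0T^*$ the stack with head on its last symbol; $C$ is the set of configurations, $H_A=\ell_2(C)$; for $c=|\nu_i q_j\sigma\nu_k,\omega_l\tau\rangle$, $U_A|c\rangle=\sum_{(q,d,\omega)}\delta(q_j,\sigma,\tau,q,d,\omega)|f(c,d,q),\omega_l\omega\rangle$,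 where $f(c,\downarrow,q)=\nu_i q\sigma\nu_k$, $f(c,\to,q)=\nu_i\sigma q\nu_k$. Recognition: $E_a,E_r,E_n$ are the subspaces spanned by configurations with state in $Q_a$, in $Q_r$, in neither; on input $x$ start in $|q_0\#x\$,Z_0\rangle$, repeatedly apply $U_A$ and measure w.r.t. $E_a\oplus E_r\oplus E_n$, halting on ``accept''/``reject'' and otherwise continuing from the normalized projection onto $E_n$; acceptance/rejection probability is the total probability of eventually halting with that outcome. *)

theory Defs
  imports "HOL-Analysis.Analysis"
begin

datatype abc = a | b | c

text \<open>Tape symbols Gamma = Sigma plus the end-markers # (LEnd) and $ (REnd).\<close>
datatype tsym = Sym abc | LEnd | REnd

text \<open>Stack symbols Delta = T plus the base symbol Z0; stack symbols of T are
  encoded as natural numbers (TS t with t in the finite set T).\<close>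
datatype stk = Z0 | TS nat

datatype dir = Stay | Right

text \<open>A QPA over the input alphabet {a,b,c}; states and stack symbols are
  natural numbers taken from the finite sets Q and T.\<close>
record qpa =
  Qs  :: "nat set"
  Ts  :: "nat set"
  q0  :: nat
  Qa  :: "nat set"
  Qr  :: "nat set"
  delta :: "nat \<Rightarrow> tsym \<Rightarrow> stk \<Rightarrow> nat \<Rightarrow> dir \<Rightarrow> stk list \<Rightarrow> complex"

definition Delta :: "qpa \<Rightarrow> stk set" where
  "Delta A = insert Z0 (TS ` Ts A)"

definition in_TStar :: "qpa \<Rightarrow> stk list \<Rightarrow> bool" where
  "in_TStar A w \<longleftrightarrow> (\<forall>s\<in>set w. s \<in> TS ` Ts A)"

definition in_Z0TStar :: "qpa \<Rightarrow> stk list \<Rightarrow> bool" where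
  "in_Z0TStar A w \<longleftrightarrow> w \<noteq> [] \<and> hd w = Z0 \<and> in_TStar A (tl w)"

text \<open>Configurations |nu_i q nu_k, omega>: (x, i, q, s) where #x$ = nu_i nu_k,
  the input head is on position i of the tape #x$ (i.e. length nu_i = i),
  q is the state, and s is the stack (head on its last symbol).\<close>
type_synonym config = "abc list \<times> nat \<times> nat \<times> stk list"

definition tape :: "abc list \<Rightarrow> tsym list" where
  "tape x = LEnd # map Sym x @ [REnd]"

definition Conf :: "qpa \<Rightarrow> config set" where
  "Conf A = {(x, i, q, s). i < length (tape x) \<and> q \<in> Qs A \<and> in_Z0TStar A s}"

text \<open>Amplitude <d|U_A|c>: the coefficient of |d> in U_A|c>.\<close>
fun amp :: "qpa \<Rightarrow> config \<Rightarrow> config \<Rightarrow> complex" where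
  "amp A (x, i, q, s) (x', i', q', s') =
     (if x' = x \<and> s \<noteq> [] \<and> take (length s - 1) s' = butlast s
         \<and> length s' \<ge> length s - 1 \<and> (i' = i \<or> i' = Suc i)
      then delta A q (tape x ! i) (last s) q' (if i' = i then Stay else Right)
             (drop (length s - 1) s')
      else 0)"

definition unitary_UA :: "qpa \<Rightarrow> bool" where
  "unitary_UA A \<longleftrightarrow>
     (\<forall>c\<in>Conf A. \<forall>d. amp A c d \<noteq> 0 \<longrightarrow> d \<in> Conf A) \<and>
     (\<forall>c\<in>Conf A. \<forall>c'\<in>Conf A.
        ((\<lambda>d. amp A c d * cnj (amp A c' d)) has_sum (if c = c' then 1 else 0)) (Conf A)) \<and>
     (\<forall>d\<in>Conf A. \<forall>d'\<in>Conf A.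
        ((\<lambda>c. amp A c d * cnj (amp A c d')) has_sum (if d = d' then 1 else 0)) (Conf A))"

definition is_QPA :: "qpa \<Rightarrow> bool" where
  "is_QPA A \<longleftrightarrow>
     finite (Qs A) \<and> finite (Ts A) \<and> q0 A \<in> Qs A \<and>
     Qa A \<subseteq> Qs A \<and> Qr A \<subseteq> Qs A \<and> Qa A \<inter> Qr A = {} \<and>
     (\<forall>q \<alpha> \<beta> q' d \<omega>. delta A q \<alpha> \<beta> q' d \<omega> \<noteq> 0 \<longrightarrow>
        q \<in> Qs A \<and> q' \<in> Qs A \<and> \<beta> \<in> Delta A \<and> set \<omega> \<subseteq> Delta A \<and>
        length \<omega> \<le> 2 \<and>
        (length \<omega> = 2 \<longrightarrow> \<omega> ! 0 = \<beta>) \<and>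
        (\<beta> = Z0 \<longrightarrow> in_Z0TStar A \<omega>) \<and>
        (\<beta> \<noteq> Z0 \<longrightarrow> in_TStar A \<omega>)) \<and>
     unitary_UA A"

definition supp_v :: "(config \<Rightarrow> complex) \<Rightarrow> config set" where
  "supp_v \<psi> = {c. \<psi> c \<noteq> 0}"

definition applyU :: "qpa \<Rightarrow> (config \<Rightarrow> complex) \<Rightarrow> config \<Rightarrow> complex" where
  "applyU A \<psi> = (\<lambda>d. \<Sum>c\<in>supp_v \<psi>. \<psi> c * amp A c d)"

definition proj :: "(nat \<Rightarrow> bool) \<Rightarrow> (config \<Rightarrow> complex) \<Rightarrow> config \<Rightarrow> complex" where
  "proj P \<psi> = (\<lambda>(x, i, q, s). if P q then \<psi> (x, i, q, s) else 0)"

definition sqnorm :: "(config \<Rightarrow> complex) \<Rightarrow> real" where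
  "sqnorm \<psi> = (\<Sum>c\<in>supp_v \<psi>. (cmod (\<psi> c))\<^sup>2)"

definition init_vec :: "qpa \<Rightarrow> abc list \<Rightarrow> config \<Rightarrow> complex" where
  "init_vec A x = (\<lambda>c. if c = (x, 0, q0 A, [Z0]) then 1 else 0)"

text \<open>Unnormalised non-halting component after n steps (U then projection onto E_n).\<close>
primrec run_vec :: "qpa \<Rightarrow> abc list \<Rightarrow> nat \<Rightarrow> config \<Rightarrow> complex" where
  "run_vec A x 0 = init_vec A x"
| "run_vec A x (Suc n) =
     proj (\<lambda>q. q \<notin> Qa A \<and> q \<notin> Qr A) (applyU A (run_vec A x n))"

definition acc_prob :: "qpa \<Rightarrow> abc list \<Rightarrow> real" where
  "acc_prob A x = (\<Sum>n. sqnorm (proj (\<lambda>q. q \<in> Qa A) (applyU A (run_vec A x n))))"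

definition rej_prob :: "qpa \<Rightarrow> abc list \<Rightarrow> real" where
  "rej_prob A x = (\<Sum>n. sqnorm (proj (\<lambda>q. q \<in> Qr A) (applyU A (run_vec A x n))))"

definition L5 :: "abc list set" where
  "L5 = {w. (count_list w a = count_list w b) \<noteq> (count_list w a = count_list w c)}"

end

theory Submission
  imports Defs
begin


definition lop :: "nat \<Rightarrow> abc \<Rightarrow> int" where
  "lop q l = (if q div 2 = 0 then (case l of a \<Rightarrow> 1 | b \<Rightarrow> -1 | c \<Rightarrow> 0)
     else if q div 2 = 1 then (case l of a \<Rightarrow> 1 | b \<Rightarrow> 0 | c \<Rightarrow> -1)
     else if q div 2 = 2 then (case l of a \<Rightarrow> 0 | b \<Rightarrow> 1 | c \<Rightarrow> -1) else 0)"

definition nxt :: "nat \<Rightarrow> tsym \<Rightarrow> stk \<Rightarrow> nat \<times> dir \<times> stk list" where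
  "nxt q \<sigma> \<beta> =
   (if q < 7 then (case \<sigma> of
       LEnd \<Rightarrow> (if \<beta> = Z0 then (q, Right, [Z0]) else if \<beta> = TS 0 then (q, Stay, []) else (q, Right, [TS 0]))
     | Sym l \<Rightarrow> (if lop q l = 0 then (q, Right, [\<beta>])
                 else if (lop q l = 1) = even q then (q, Right, [\<beta>, TS 0])
                 else if \<beta> = TS 0 then (q, Right, [])
                 else (if even q then q+1 else q - 1, Right, [\<beta>]))
     | REnd \<Rightarrow> (if \<beta> = TS 0 then (q+21, Stay, []) else (q+14, Stay, [\<beta>])))
    else if q < 14 then (case \<sigma> of
       LEnd \<Rightarrow> (if \<beta> = Z0 then (q, Right, [Z0]) else if \<beta> = TS 0 then (q, Stay, []) else (q-7, Right, [\<beta>]))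
     | Sym l \<Rightarrow> (if \<beta> = Z0 then (q, Right, [Z0]) else (q, Stay, [\<beta>]))
     | REnd \<Rightarrow> (q, Stay, [\<beta>, TS 0]))
    else if q < 21 then (case \<sigma> of REnd \<Rightarrow> (q-7, Stay, [\<beta>, TS 1]) | _ \<Rightarrow> (q, Stay, [\<beta>]))
    else (case \<sigma> of REnd \<Rightarrow> (q-7, Stay, [\<beta>, TS 0]) | _ \<Rightarrow> (q, Stay, [\<beta>])))"

definition starts :: "nat set" where "starts = {0,2,4,6}"

definition nn :: "nat \<Rightarrow> real" where
  "nn i = (if i = 0 then 17 else if i = 1 then -14 else if i = 2 then -20 else -13)"

definition hq :: "nat \<Rightarrow> nat \<Rightarrow> real" where
  "hq q q' = (if q = q' then 1 else 0) - nn (q div 2) * nn (q' div 2) / 527"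

definition dl :: "nat \<Rightarrow> tsym \<Rightarrow> stk \<Rightarrow> nat \<Rightarrow> dir \<Rightarrow> stk list \<Rightarrow> complex" where
  "dl q \<sigma> \<beta> q' d \<omega> =
    (if q \<in> starts \<and> \<sigma> = LEnd \<and> \<beta> = Z0 then
       (if q' \<in> starts \<and> d = Right \<and> \<omega> = [Z0] then complex_of_real (hq q q') else 0)
     else if q < 28 \<and> \<beta> \<in> {Z0, TS 0, TS 1} \<and> nxt q \<sigma> \<beta> = (q', d, \<omega>) then 1 else 0)"

definition A0 :: qpa where
  "A0 = \<lparr>Qs = {..<28}, Ts = {0,1}, q0 = 0, Qa = {14,16,19,25,26},
         Qr = {15,17,18,20,21,22,23,24,27}, delta = dl\<rparr>"

lemma hq_orth: "q \<in> starts \<Longrightarrow> q' \<in> starts \<Longrightarrow>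
   (\<Sum>p\<in>starts. hq q p * hq q' p) = (if q = q' then 1 else 0)"
proof -
  have s: "(\<Sum>p\<in>starts. g p) = g 0 + g 2 + g 4 + g 6" for g :: "nat \<Rightarrow> real" by (simp add: starts_def)
  assume "q \<in> starts" "q' \<in> starts"
  then have "q = 0 \<or> q = 2 \<or> q = 4 \<or> q = 6" "q' = 0 \<or> q' = 2 \<or> q' = 4 \<or> q' = 6" by (auto simp: starts_def)
  then show ?thesis unfolding s by (elim disjE) (simp_all add: hq_def nn_def)
qed

lemma hq_sym: "hq q q' = hq q' q"
  unfolding hq_def by auto

lemma nxt_ok:
  assumes "q < 28" "\<beta> \<in> {Z0, TS 0, TS 1}" "nxt q \<sigma> \<beta> = (q', d, \<omega>)"
  shows "q' < 28 \<and> set \<omega> \<subseteq> {Z0, TS 0, TS 1} \<and> length \<omega> \<le> 2 \<and>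
         (length \<omega> = 2 \<longrightarrow> \<omega> ! 0 = \<beta>) \<and>
         (\<beta> = Z0 \<longrightarrow> \<omega> \<noteq> [] \<and> hd \<omega> = Z0 \<and> set (tl \<omega>) \<subseteq> {TS 0, TS 1}) \<and>
         (\<beta> \<noteq> Z0 \<longrightarrow> set \<omega> \<subseteq> {TS 0, TS 1})"
  using assms unfolding nxt_def
  by (cases \<sigma>) (auto split: if_splits)



definition vstk :: "stk list \<Rightarrow> bool" where
  "vstk s \<longleftrightarrow> (\<exists>w. s = Z0 # w \<and> set w \<subseteq> {TS 0, TS 1})"

lemma vstk_Z0[simp]: "vstk [Z0]" by (simp add: vstk_def)

lemma vstk_snoc[simp]: "vstk (s @ [TS n]) \<longleftrightarrow> vstk s \<and> (n = 0 \<or> n = 1)"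
  unfolding vstk_def by (cases s) auto

lemma vstk_cases:
  assumes "vstk s"
  obtains "s = [Z0]" | s0 where "vstk s0" "s = s0 @ [TS 0]" | s0 where "vstk s0" "s = s0 @ [TS 1]"
proof -
  from assms obtain w where w: "s = Z0 # w" "set w \<subseteq> {TS 0, TS 1}" by (auto simp: vstk_def)
  show thesis
  proof (cases w rule: rev_cases)
    case Nil then show ?thesis using that w by simp
  next
    case (snoc w0 y)
    then have "y = TS 0 \<or> y = TS 1" using w by auto
    moreover have "vstk (Z0 # w0)" using w snoc by (auto simp: vstk_def)
    ultimately show ?thesis using that w snoc by (metis append_Cons)
  qed
qed

lemma vstk_ne: "vstk s \<Longrightarrow> s \<noteq> []" by (auto simp: vstk_def)
lemma vstk_not_Z0_snoc: "vstk s \<Longrightarrow> s @ [TS n] \<noteq> [Z0]" by (auto simp: vstk_def)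

lemma Conf_A0: "Conf A0 = {(x, i, q, s). i < length x + 2 \<and> q < 28 \<and> vstk s}"
proof -
  have "in_Z0TStar A0 s \<longleftrightarrow> vstk s" for s
    unfolding in_Z0TStar_def in_TStar_def vstk_def A0_def
    by (cases s) auto
  then show ?thesis unfolding Conf_def tape_def A0_def by auto
qed

lemma tape_nth: "i < length x + 2 \<Longrightarrow>
  tape x ! i = (if i = 0 then LEnd else if i \<le> length x then Sym (x ! (i - 1)) else REnd)"
  unfolding tape_def by (auto simp: nth_append nth_Cons')

definition opr :: "int \<Rightarrow> nat \<Rightarrow> stk list \<Rightarrow> nat \<times> stk list" where
  "opr e q s = (if e = 0 then (q, s) else if (e = 1) = even q then (q, s @ [TS 0])
      else if last s = TS 0 then (q, butlast s) else (if even q then q + 1 else q - 1, s))"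

definition F :: "config \<Rightarrow> config" where
  "F cf = (case cf of (x, i, q, s) \<Rightarrow> (case nxt q (tape x ! i) (last s) of (q', d, \<omega>) \<Rightarrow>
       (x, if d = Right then Suc i else i, q', butlast s @ \<omega>)))"

definition Finv :: "config \<Rightarrow> config" where
  "Finv cf = (case cf of (x, i, q, s) \<Rightarrow>
   (if i = 0 then (if q < 14 then (x, 0, q, s @ [TS 0]) else (x, 0, q, s))
    else if q < 7 \<or> (q < 14 \<and> s = [Z0]) then
      (if i = 1 then
         (if q < 7 then (if s = [Z0] then (x, 0, q, s) else if last s = TS 0 then (x, 0, q, butlast s @ [TS 1])
                         else (x, 0, q + 7, s))
          else (x, 0, q, s))
       else (if q < 7 then (case opr (- lop q (x ! (i - 2))) q s of (q', s') \<Rightarrow> (x, i - 1, q', s'))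
             else (x, i - 1, q, s)))
    else if i \<le> length x then (x, i, q, s)
    else (if q < 14 then (if last s = TS 0 then (x, i, q, butlast s) else (x, i, q + 7, butlast s))
          else if q < 21 then (if s = [Z0] then (x, i, q - 14, s) else if last s = TS 0 then (x, i, q + 7, butlast s)
                               else (x, i, q - 14, s))
          else (x, i, q - 21, s @ [TS 0]))))"

lemma lop_range: "lop q l = 0 \<or> lop q l = 1 \<or> lop q l = -1"
  unfolding lop_def by (cases l) auto

lemma lop_6: "q \<ge> 6 \<Longrightarrow> lop q l = 0"
  unfolding lop_def by auto

lemma lop_flip: "q < 6 \<Longrightarrow> lop (if even q then q + 1 else q - 1) l = lop q l"
  unfolding lop_def by (auto elim!: evenE oddE)



lemma vstk_bl[simp]: "vstk s \<Longrightarrow> butlast s @ [last s] = s"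
  using vstk_ne by simp

lemma vstk_bl2[simp]: "vstk s \<Longrightarrow> butlast s @ last s # w = s @ w"
  using vstk_bl by (metis append.assoc append_Cons append_Nil)

lemma vstk_snoc2[simp]: "vstk (s @ [TS n, TS m]) \<longleftrightarrow> vstk s \<and> (n = 0 \<or> n = 1) \<and> (m = 0 \<or> m = 1)"
  using vstk_snoc[of "s @ [TS n]" m] vstk_snoc[of s n] by simp

lemma vstk_Z0T[simp]: "vstk [Z0, TS n] \<longleftrightarrow> (n = 0 \<or> n = 1)"
  using vstk_snoc[of "[Z0]" n] by simp

lemmas [simp] = butlast_append

lemma F_Finv_R0:
  assumes "i = 0" "q < 7" "vstk s"
  shows "F (x, i, q, s) \<in> Conf A0 \<and> Finv (F (x, i, q, s)) = (x, i, q, s)"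
  using assms
  by (cases rule: vstk_cases[OF assms(3)])
     (auto simp: F_def Finv_def nxt_def tape_nth Conf_A0 vstk_not_Z0_snoc)

lemma F_Finv_R2:
  assumes "i = length x + 1" "q < 7" "vstk s"
  shows "F (x, i, q, s) \<in> Conf A0 \<and> Finv (F (x, i, q, s)) = (x, i, q, s)"
  using assms
  by (cases rule: vstk_cases[OF assms(3)])
     (auto simp: F_def Finv_def nxt_def tape_nth Conf_A0 vstk_not_Z0_snoc)



lemma F_Finv_R1:
  assumes "0 < i" "i \<le> length x" "q < 7" "vstk s"
  shows "F (x, i, q, s) \<in> Conf A0 \<and> Finv (F (x, i, q, s)) = (x, i, q, s)"
proof -
  define l where "l = x ! (i - 1)"
  have t: "tape x ! i = Sym l" using assms by (simp add: tape_nth l_def)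
  have t2: "x ! (Suc i - 2) = l" using assms by (simp add: l_def)
  consider "lop q l = 0" | "lop q l = 1" | "lop q l = -1" using lop_range by blast
  then show ?thesis
  proof cases
    case 1
    then show ?thesis using assms t t2
      by (auto simp: F_def Finv_def nxt_def Conf_A0 opr_def)
  next
    case 2
    show ?thesis
    proof (cases "even q")
      case True
      then show ?thesis using assms t t2 2
        by (auto simp: F_def Finv_def nxt_def Conf_A0 opr_def)
    next
      case False
      then have q6: "q < 6" using assms by presburger
      have fl: "lop (q - 1) l = 1" using lop_flip[OF q6, of l] False 2 by simp
      show ?thesis using assms(4)
      proof (cases rule: vstk_cases)
        case 1
        then show ?thesis using assms t t2 2 False fl
          by (auto simp: F_def Finv_def nxt_def Conf_A0 opr_def)
      next
        case (2 s0)
        then show ?thesis using assms t t2 \<open>lop q l = 1\<close> False fl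
          by (auto simp: F_def Finv_def nxt_def Conf_A0 opr_def vstk_not_Z0_snoc)
      next
        case (3 s0)
        then show ?thesis using assms t t2 \<open>lop q l = 1\<close> False fl
          by (auto simp: F_def Finv_def nxt_def Conf_A0 opr_def vstk_not_Z0_snoc)
      qed
    qed
  next
    case 3
    show ?thesis
    proof (cases "odd q")
      case True
      then show ?thesis using assms t t2 3
        by (auto simp: F_def Finv_def nxt_def Conf_A0 opr_def)
    next
      case False
      then have q6: "q < 6" using assms 3 lop_6[of q l] by presburger
      have fl: "lop (q + 1) l = -1" using lop_flip[OF q6, of l] False 3 by simp
      show ?thesis using assms(4)
      proof (cases rule: vstk_cases)
        case 1
        then show ?thesis using assms t t2 3 False fl q6
          by (auto simp: F_def Finv_def nxt_def Conf_A0 opr_def)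
      next
        case (2 s0)
        then show ?thesis using assms t t2 \<open>lop q l = -1\<close> False fl q6
          by (auto simp: F_def Finv_def nxt_def Conf_A0 opr_def vstk_not_Z0_snoc)
      next
        case (3 s0)
        then show ?thesis using assms t t2 \<open>lop q l = -1\<close> False fl q6
          by (auto simp: F_def Finv_def nxt_def Conf_A0 opr_def vstk_not_Z0_snoc)
      qed
    qed
  qed
qed



lemma F_Finv_J:
  assumes "i < length x + 2" "7 \<le> q" "q < 28" "vstk s"
  shows "F (x, i, q, s) \<in> Conf A0 \<and> Finv (F (x, i, q, s)) = (x, i, q, s)"
proof -
  consider "i = 0" | "0 < i" "i \<le> length x" | "i = length x + 1" using assms by linarith
  then show ?thesis
  proof cases
    case 1
    then show ?thesis using assms
      by (cases rule: vstk_cases[OF assms(4)])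
         (auto simp: F_def Finv_def nxt_def tape_nth Conf_A0 vstk_not_Z0_snoc)
  next
    case 2
    then show ?thesis using assms
      by (cases rule: vstk_cases[OF assms(4)])
         (auto simp: F_def Finv_def nxt_def tape_nth Conf_A0 vstk_not_Z0_snoc)
  next
    case 3
    then show ?thesis using assms
      by (cases rule: vstk_cases[OF assms(4)])
         (auto simp: F_def Finv_def nxt_def tape_nth Conf_A0 vstk_not_Z0_snoc)
  qed
qed

lemma F_Finv:
  assumes "cf \<in> Conf A0"
  shows "F cf \<in> Conf A0 \<and> Finv (F cf) = cf"
proof -
  obtain x i q s where cf: "cf = (x, i, q, s)" by (cases cf) auto
  have h: "i < length x + 2" "q < 28" "vstk s" using assms cf by (auto simp: Conf_A0)
  show ?thesis
  proof (cases "q < 7")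
    case True
    consider "i = 0" | "0 < i" "i \<le> length x" | "i = length x + 1" using h by linarith
    then show ?thesis
      using F_Finv_R0[of i q s x] F_Finv_R1[of i x q s] F_Finv_R2[of i x q s] h True cf
      by cases auto
  next
    case False
    then show ?thesis using F_Finv_J[of i x q s] h cf by auto
  qed
qed



lemma Finv_F_Rmid:
  assumes "2 \<le> i" "i \<le> length x + 1" "q < 7" "vstk s"
  shows "Finv (x, i, q, s) \<in> Conf A0 \<and> F (Finv (x, i, q, s)) = (x, i, q, s)"
proof -
  define l where "l = x ! (i - 2)"
  have e2: "i - Suc (Suc 0) = i - 2" by simp
  have t: "tape x ! (i - 1) = Sym l" using assms by (simp add: tape_nth l_def e2)
  have iv: "Suc (i - 1) = i" using assms by simp
  consider "lop q l = 0" | "lop q l = 1" | "lop q l = -1" using lop_range by blast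
  then show ?thesis
  proof cases
    case 1
    then show ?thesis using assms t iv
      by (auto simp: F_def Finv_def nxt_def Conf_A0 opr_def l_def)
  next
    case 2
    show ?thesis
    proof (cases "odd q")
      case True
      then show ?thesis using assms t 2 iv
        by (auto simp: F_def Finv_def nxt_def Conf_A0 opr_def l_def)
    next
      case False
      then have q6: "q < 6" using assms 2 lop_6[of q l] by presburger
      have fl: "lop (q + 1) l = 1" using lop_flip[OF q6, of l] False 2 by simp
      show ?thesis using assms(4)
      proof (cases rule: vstk_cases)
        case 1
        then show ?thesis using assms t 2 False fl q6 iv
          by (auto simp: F_def Finv_def nxt_def Conf_A0 opr_def l_def)
      next
        case (2 s0)
        then show ?thesis using assms t \<open>lop q l = 1\<close> False fl q6 iv
          by (auto simp: F_def Finv_def nxt_def Conf_A0 opr_def vstk_not_Z0_snoc l_def)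
      next
        case (3 s0)
        then show ?thesis using assms t \<open>lop q l = 1\<close> False fl q6 iv
          by (auto simp: F_def Finv_def nxt_def Conf_A0 opr_def vstk_not_Z0_snoc l_def)
      qed
    qed
  next
    case 3
    show ?thesis
    proof (cases "even q")
      case True
      then show ?thesis using assms t 3 iv
        by (auto simp: F_def Finv_def nxt_def Conf_A0 opr_def l_def)
    next
      case False
      then have q6: "q < 6" using assms by presburger
      have fl: "lop (q - 1) l = -1" using lop_flip[OF q6, of l] False 3 by simp
      show ?thesis using assms(4)
      proof (cases rule: vstk_cases)
        case 1
        then show ?thesis using assms t 3 False fl q6 iv
          by (auto simp: F_def Finv_def nxt_def Conf_A0 opr_def l_def)
      next
        case (2 s0)
        then show ?thesis using assms t \<open>lop q l = -1\<close> False fl q6 iv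
          by (auto simp: F_def Finv_def nxt_def Conf_A0 opr_def vstk_not_Z0_snoc l_def)
      next
        case (3 s0)
        then show ?thesis using assms t \<open>lop q l = -1\<close> False fl q6 iv
          by (auto simp: F_def Finv_def nxt_def Conf_A0 opr_def vstk_not_Z0_snoc l_def)
      qed
    qed
  qed
qed

lemma Finv_F_other:
  assumes "i < length x + 2" "q < 28" "vstk s" "\<not> (2 \<le> i \<and> q < 7)"
  shows "Finv (x, i, q, s) \<in> Conf A0 \<and> F (Finv (x, i, q, s)) = (x, i, q, s)"
proof -
  consider "i = 0" | "i = 1" | "2 \<le> i" "i \<le> length x" | "i = length x + 1" "2 \<le> i" using assms by linarith
  then show ?thesis
  proof cases
    case 1
    then show ?thesis using assms
      by (cases rule: vstk_cases[OF assms(3)])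
         (auto simp: F_def Finv_def nxt_def tape_nth Conf_A0 vstk_not_Z0_snoc)
  next
    case 2
    then show ?thesis using assms
      by (cases rule: vstk_cases[OF assms(3)])
         (auto simp: F_def Finv_def nxt_def tape_nth Conf_A0 vstk_not_Z0_snoc)
  next
    case 3
    then show ?thesis using assms
      by (cases rule: vstk_cases[OF assms(3)])
         (auto simp: F_def Finv_def nxt_def tape_nth Conf_A0 vstk_not_Z0_snoc)
  next
    case 4
    then show ?thesis using assms
      by (cases rule: vstk_cases[OF assms(3)])
         (auto simp: F_def Finv_def nxt_def tape_nth Conf_A0 vstk_not_Z0_snoc)
  qed
qed

lemma Finv_F:
  assumes "cf \<in> Conf A0"
  shows "Finv cf \<in> Conf A0 \<and> F (Finv cf) = cf"
proof -
  obtain x i q s where cf: "cf = (x, i, q, s)" by (cases cf) auto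
  have h: "i < length x + 2" "q < 28" "vstk s" using assms cf by (auto simp: Conf_A0)
  show ?thesis
    using Finv_F_Rmid[of i x q s] Finv_F_other[of i x q s] h cf by fastforce
qed

lemma bij_F: "bij_betw F (Conf A0) (Conf A0)"
  by (rule bij_betw_byWitness[where f' = Finv]) (use F_Finv Finv_F in auto)

lemma bij_Finv: "bij_betw Finv (Conf A0) (Conf A0)"
  by (rule bij_betw_byWitness[where f' = F]) (use F_Finv Finv_F in auto)



definition blk :: "config \<Rightarrow> bool" where
  "blk cf \<longleftrightarrow> (\<exists>x q. cf = (x, 0, q, [Z0]) \<and> q \<in> starts)"

lemma A0_simps[simp]: "delta A0 = dl" "Qs A0 = {..<28}" "Ts A0 = {0,1}" "q0 A0 = 0"
  "Qa A0 = {14,16,19,25,26}" "Qr A0 = {15,17,18,20,21,22,23,24,27}"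
  by (simp_all add: A0_def)

lemma last_vstk: "vstk s \<Longrightarrow> last s \<in> {Z0, TS 0, TS 1}"
  by (cases rule: vstk_cases) auto

lemma last_Z0: "vstk s \<Longrightarrow> last s = Z0 \<longleftrightarrow> s = [Z0]"
  by (cases rule: vstk_cases) auto

lemma amp_nonblk:
  assumes "cf \<in> Conf A0" "\<not> blk cf"
  shows "amp A0 cf d = (if d = F cf then 1 else 0)"
proof -
  obtain x i q s where cf: "cf = (x, i, q, s)" by (cases cf) auto
  obtain x' i' q' s' where d: "d = (x', i', q', s')" by (cases d) auto
  have h: "i < length x + 2" "q < 28" "vstk s" using assms cf by (auto simp: Conf_A0)
  have sne: "s \<noteq> []" using h vstk_ne by auto
  obtain q1 dir \<omega> where nx: "nxt q (tape x ! i) (last s) = (q1, dir, \<omega>)" by (metis prod.exhaust)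
  have nb: "\<not> (q \<in> starts \<and> tape x ! i = LEnd \<and> last s = Z0)"
  proof
    assume "q \<in> starts \<and> tape x ! i = LEnd \<and> last s = Z0"
    then have "i = 0" "s = [Z0]" "q \<in> starts" using h tape_nth[of i x] last_Z0[of s] by (auto split: if_splits)
    then show False using assms(2) cf by (auto simp: blk_def)
  qed
  have Fc: "F cf = (x, if dir = Right then Suc i else i, q1, butlast s @ \<omega>)"
    using cf nx by (simp add: F_def)
  let ?dd = "if i' = i then Stay else Right"
  let ?w = "drop (length s - 1) s'"
  have dlv: "dl q (tape x ! i) (last s) q' ?dd ?w = (if (q1, dir, \<omega>) = (q', ?dd, ?w) then 1 else 0)"
    using nb h last_vstk[of s] nx by (auto simp: dl_def)
  have lb: "length (butlast s) = length s - 1" by simp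
  have eq: "(x' = x \<and> take (length s - 1) s' = butlast s \<and> length s' \<ge> length s - 1 \<and> (i' = i \<or> i' = Suc i)
             \<and> (q1, dir, \<omega>) = (q', ?dd, ?w)) \<longleftrightarrow> d = F cf"
  proof
    assume A: "x' = x \<and> take (length s - 1) s' = butlast s \<and> length s' \<ge> length s - 1 \<and> (i' = i \<or> i' = Suc i)
             \<and> (q1, dir, \<omega>) = (q', ?dd, ?w)"
    have "s' = take (length s - 1) s' @ drop (length s - 1) s'" by (rule append_take_drop_id[symmetric])
    then have "s' = butlast s @ \<omega>" using A by (metis prod.inject)
    moreover have "i' = (if dir = Right then Suc i else i)" using A by (cases "i' = i") auto
    ultimately show "d = F cf" using A d Fc by auto
  next
    assume B: "d = F cf"
    then have s': "s' = butlast s @ \<omega>" and x': "x' = x" and q': "q' = q1"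
      and i': "i' = (if dir = Right then Suc i else i)" using d Fc by auto
    have "take (length s - 1) s' = butlast s" using s' lb by (metis append_eq_conv_conj)
    moreover have "?w = \<omega>" using s' lb by (metis append_eq_conv_conj)
    moreover have "length s' \<ge> length s - 1" using s' lb by simp
    moreover have "?dd = dir" using i' by (cases dir) auto
    ultimately show "x' = x \<and> take (length s - 1) s' = butlast s \<and> length s' \<ge> length s - 1 \<and> (i' = i \<or> i' = Suc i)
             \<and> (q1, dir, \<omega>) = (q', ?dd, ?w)" using x' q' i' by auto
  qed
  show ?thesis
    unfolding cf d amp.simps using sne dlv eq[unfolded d cf] by (auto simp del: F_def)
qed



lemma tape0[simp]: "tape x ! 0 = LEnd" by (simp add: tape_def)

lemma amp_blk:
  assumes "q \<in> starts"
  shows "amp A0 (x, 0, q, [Z0]) (x', i', q', s') =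
     (if x' = x \<and> i' = 1 \<and> q' \<in> starts \<and> s' = [Z0] then complex_of_real (hq q q') else 0)"
  using assms by (auto simp: dl_def)

definition G :: "config \<Rightarrow> config \<Rightarrow> complex" where
  "G cf e = (if blk cf \<and> blk e \<and> fst cf = fst e then complex_of_real (hq (fst (snd (snd cf))) (fst (snd (snd e))))
             else if cf = e then 1 else 0)"

lemma starts_lt: "q \<in> starts \<Longrightarrow> q < 7" by (auto simp: starts_def)

lemma amp_G:
  assumes "cf \<in> Conf A0"
  shows "amp A0 cf d = (if d \<in> Conf A0 then G cf (Finv d) else 0)"
proof (cases "blk cf")
  case False
  have "amp A0 cf d = (if d = F cf then 1 else 0)" by (rule amp_nonblk[OF assms False])
  moreover have "d \<in> Conf A0 \<Longrightarrow> (d = F cf) = (Finv d = cf)"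
    using F_Finv[OF assms] Finv_F[of d] by metis
  moreover have "d = F cf \<Longrightarrow> d \<in> Conf A0" using F_Finv[OF assms] by simp
  ultimately show ?thesis using False by (auto simp: G_def)
next
  case True
  then obtain x q where cf: "cf = (x, 0, q, [Z0])" "q \<in> starts" by (auto simp: blk_def)
  obtain x' i' q' s' where d: "d = (x', i', q', s')" by (cases d) auto
  have a: "amp A0 cf d = (if x' = x \<and> i' = 1 \<and> q' \<in> starts \<and> s' = [Z0] then complex_of_real (hq q q') else 0)"
    using amp_blk[OF cf(2)] cf d by simp
  show ?thesis
  proof (cases "d \<in> Conf A0")
    case False
    then have "\<not> (x' = x \<and> i' = 1 \<and> q' \<in> starts \<and> s' = [Z0])"
      using d starts_lt[of q'] by (auto simp: Conf_A0)
    then show ?thesis using a False by auto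
  next
    case dC: True
    have "G cf (Finv d) = (if x' = x \<and> i' = 1 \<and> q' \<in> starts \<and> s' = [Z0] then complex_of_real (hq q q') else 0)"
    proof (cases "x' = x \<and> i' = 1 \<and> q' \<in> starts \<and> s' = [Z0]")
      case True
      then have "Finv d = (x, 0, q', [Z0])" using d starts_lt[of q'] by (auto simp: Finv_def)
      then show ?thesis using True cf by (auto simp: G_def blk_def)
    next
      case False
      have "\<not> (blk (Finv d) \<and> fst (Finv d) = x)"
      proof
        assume B: "blk (Finv d) \<and> fst (Finv d) = x"
        then obtain q'' where f: "Finv d = (x, 0, q'', [Z0])" "q'' \<in> starts" by (auto simp: blk_def)
        have "d = F (Finv d)" using Finv_F[OF dC] by simp
        also have "\<dots> = (x, 1, q'', [Z0])" using f starts_lt[of q''] by (simp add: F_def nxt_def)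
        finally show False using False d f by auto
      qed
      moreover have "cf \<noteq> Finv d"
      proof
        assume "cf = Finv d"
        then have "Finv d = (x, 0, q, [Z0])" using cf by simp
        then have "blk (Finv d) \<and> fst (Finv d) = x" using cf by (auto simp: blk_def)
        then show False using calculation by blast
      qed
      ultimately show ?thesis using False cf by (auto simp: G_def)
    qed
    then show ?thesis using a dC by simp
  qed
qed



lemma G_sym: "G cf e = G e cf"
  unfolding G_def by (auto simp: hq_sym)

lemma G_row:
  assumes "cf \<in> Conf A0" "cf' \<in> Conf A0"
  shows "((\<lambda>e. G cf e * cnj (G cf' e)) has_sum (if cf = cf' then 1 else 0)) (Conf A0)"
proof (cases "blk cf")
  case True
  then obtain x q where cf: "cf = (x, 0, q, [Z0])" "q \<in> starts" by (auto simp: blk_def)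
  define B where "B = (\<lambda>p. (x, 0::nat, p, [Z0])) ` starts"
  have fB: "finite B" by (simp add: B_def starts_def)
  have BC: "B \<subseteq> Conf A0" using starts_lt by (force simp: B_def Conf_A0)
  have z: "G cf e * cnj (G cf' e) = 0" if "e \<in> Conf A0 - B" for e
  proof -
    have "\<not> (blk e \<and> fst e = x)" using that by (auto simp: blk_def B_def)
    moreover have "cf \<noteq> e" using that cf by (auto simp: B_def)
    ultimately show ?thesis using cf True by (auto simp: G_def)
  qed
  have inj: "inj_on (\<lambda>p. (x, 0::nat, p, [Z0])) starts" by (auto simp: inj_on_def)
  have sB: "(\<Sum>e\<in>B. G cf e * cnj (G cf' e)) = (\<Sum>p\<in>starts. G cf (x, 0, p, [Z0]) * cnj (G cf' (x, 0, p, [Z0])))"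
    unfolding B_def by (simp add: sum.reindex[OF inj])
  have "(\<Sum>p\<in>starts. G cf (x, 0, p, [Z0]) * cnj (G cf' (x, 0, p, [Z0]))) = (if cf = cf' then 1 else 0)"
  proof (cases "blk cf' \<and> fst cf' = x")
    case True
    then obtain q' where cf': "cf' = (x, 0, q', [Z0])" "q' \<in> starts" by (auto simp: blk_def)
    have "(\<Sum>p\<in>starts. G cf (x, 0, p, [Z0]) * cnj (G cf' (x, 0, p, [Z0])))
          = (\<Sum>p\<in>starts. complex_of_real (hq q p * hq q' p))"
      by (rule sum.cong) (use cf cf' in \<open>auto simp: G_def blk_def\<close>)
    also have "\<dots> = complex_of_real (\<Sum>p\<in>starts. hq q p * hq q' p)" by simp
    also have "\<dots> = (if cf = cf' then 1 else 0)" using hq_orth[OF cf(2) cf'(2)] cf cf' by auto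
    finally show ?thesis .
  next
    case False
    have "G cf' (x, 0, p, [Z0]) = 0" if "p \<in> starts" for p
      using False that by (auto simp: G_def blk_def)
    moreover have "cf \<noteq> cf'" using False cf True by auto
    ultimately show ?thesis by simp
  qed
  then show ?thesis
    by (intro has_sum_finite_neutralI[OF fB BC]) (use z sB in auto)
next
  case False
  have z: "G cf e * cnj (G cf' e) = 0" if "e \<in> Conf A0 - {cf}" for e
    using that False by (auto simp: G_def)
  have "G cf' cf = (if cf = cf' then 1 else 0)" using False by (auto simp: G_def)
  moreover have "G cf cf = 1" using False by (simp add: G_def)
  ultimately show ?thesis
    by (intro has_sum_finite_neutralI[of "{cf}"]) (use z assms in auto)
qed

lemma unitary_A0: "unitary_UA A0"
  unfolding unitary_UA_def
proof (intro conjI ballI allI impI)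
  fix cf d assume "cf \<in> Conf A0" "amp A0 cf d \<noteq> 0"
  then show "d \<in> Conf A0" using amp_G by (auto split: if_splits)
next
  fix cf cf' assume h: "cf \<in> Conf A0" "cf' \<in> Conf A0"
  have "((\<lambda>d. G cf (Finv d) * cnj (G cf' (Finv d))) has_sum (if cf = cf' then 1 else 0)) (Conf A0)"
    using has_sum_reindex_bij_betw[OF bij_Finv, of "\<lambda>e. G cf e * cnj (G cf' e)"] G_row[OF h] by simp
  then show "((\<lambda>d. amp A0 cf d * cnj (amp A0 cf' d)) has_sum (if cf = cf' then 1 else 0)) (Conf A0)"
    by (rule has_sum_cong[THEN iffD1, rotated]) (use amp_G h in auto)
next
  fix d d' assume h: "d \<in> Conf A0" "d' \<in> Conf A0"
  have h': "Finv d \<in> Conf A0" "Finv d' \<in> Conf A0" using Finv_F h by auto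
  have eq: "(Finv d = Finv d') = (d = d')" using Finv_F h by metis
  have "((\<lambda>cf. G (Finv d) cf * cnj (G (Finv d') cf)) has_sum (if d = d' then 1 else 0)) (Conf A0)"
    using G_row[OF h'] eq by simp
  then show "((\<lambda>cf. amp A0 cf d * cnj (amp A0 cf d')) has_sum (if d = d' then 1 else 0)) (Conf A0)"
    by (rule has_sum_cong[THEN iffD1, rotated]) (use amp_G h G_sym in auto)
qed



lemma delta_A0_ok:
  assumes nz: "delta A0 q \<alpha> \<beta> q' d \<omega> \<noteq> 0"
  shows "q \<in> Qs A0 \<and> q' \<in> Qs A0 \<and> \<beta> \<in> Delta A0 \<and> set \<omega> \<subseteq> Delta A0 \<and> length \<omega> \<le> 2 \<and>
        (length \<omega> = 2 \<longrightarrow> \<omega> ! 0 = \<beta>) \<and> (\<beta> = Z0 \<longrightarrow> in_Z0TStar A0 \<omega>) \<and> (\<beta> \<noteq> Z0 \<longrightarrow> in_TStar A0 \<omega>)"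
proof -
  have D: "Delta A0 = {Z0, TS 0, TS 1}" by (auto simp: Delta_def)
  have P: "q < 28 \<and> q' < 28 \<and> \<beta> \<in> {Z0, TS 0, TS 1} \<and> set \<omega> \<subseteq> {Z0, TS 0, TS 1} \<and> length \<omega> \<le> 2 \<and>
         (length \<omega> = 2 \<longrightarrow> \<omega> ! 0 = \<beta>) \<and>
         (\<beta> = Z0 \<longrightarrow> \<omega> \<noteq> [] \<and> hd \<omega> = Z0 \<and> set (tl \<omega>) \<subseteq> {TS 0, TS 1}) \<and>
         (\<beta> \<noteq> Z0 \<longrightarrow> set \<omega> \<subseteq> {TS 0, TS 1})"
  proof (cases "q \<in> starts \<and> \<alpha> = LEnd \<and> \<beta> = Z0")
    case True
    then have "q' \<in> starts \<and> d = Right \<and> \<omega> = [Z0]" using nz by (auto simp: dl_def split: if_splits)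
    then show ?thesis using True starts_lt by fastforce
  next
    case False
    then have "q < 28 \<and> \<beta> \<in> {Z0, TS 0, TS 1} \<and> nxt q \<alpha> \<beta> = (q', d, \<omega>)"
      using nz by (auto simp: dl_def split: if_splits)
    then show ?thesis using nxt_ok[of q \<beta> \<alpha> q' d \<omega>] by blast
  qed
  have tsub: "set w \<subseteq> {TS 0, TS 1} \<longleftrightarrow> (\<forall>y\<in>set w. y \<in> TS ` Ts A0)" for w by auto
  show "q \<in> Qs A0 \<and> q' \<in> Qs A0 \<and> \<beta> \<in> Delta A0 \<and> set \<omega> \<subseteq> Delta A0 \<and> length \<omega> \<le> 2 \<and>
        (length \<omega> = 2 \<longrightarrow> \<omega> ! 0 = \<beta>) \<and> (\<beta> = Z0 \<longrightarrow> in_Z0TStar A0 \<omega>) \<and> (\<beta> \<noteq> Z0 \<longrightarrow> in_TStar A0 \<omega>)"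
    using P unfolding D in_Z0TStar_def in_TStar_def tsub[symmetric] by auto
qed

lemma isQPA_A0: "is_QPA A0"
  unfolding is_QPA_def using unitary_A0 delta_A0_ok by (auto simp: A0_def)



definition val :: "nat \<Rightarrow> abc list \<Rightarrow> int" where
  "val k w = (if k = 0 then int (count_list w a) - int (count_list w b)
              else if k = 1 then int (count_list w a) - int (count_list w c)
              else if k = 2 then int (count_list w b) - int (count_list w c) else 0)"

definition cfg :: "nat \<Rightarrow> abc list \<Rightarrow> nat \<times> stk list" where
  "cfg k w = (if k = 3 then (6, [Z0]) else
     if val k w \<ge> 0 then (2 * k, Z0 # replicate (nat (val k w)) (TS 0))
     else (2 * k + 1, Z0 # replicate (nat (- val k w - 1)) (TS 0)))"

lemma vstk_rep: "vstk (Z0 # replicate n (TS 0))" by (auto simp: vstk_def)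

lemma cfg_props: "k < 4 \<Longrightarrow> fst (cfg k w) < 7 \<and> fst (cfg k w) div 2 = k \<and> vstk (snd (cfg k w))"
  by (auto simp: cfg_def vstk_rep)

lemma lop_div: "q div 2 = q' div 2 \<Longrightarrow> lop q l = lop q' l"
  unfolding lop_def by simp

lemma val_snoc0: "k < 3 \<Longrightarrow> val k (w @ [l]) = val k w + lop (2 * k) l"
proof -
  assume "k < 3"
  then consider "k = 0" | "k = 1" | "k = 2" by linarith
  then show ?thesis by cases (cases l; simp add: val_def lop_def)+
qed

lemma val_snoc: "k < 3 \<Longrightarrow> val k (w @ [l]) = val k w + lop (fst (cfg k w)) l"
  using val_snoc0[of k w l] lop_div[of "fst (cfg k w)" "2 * k" l] cfg_props[of k w] by simp

lemma F_R_sym: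
  assumes "q < 7" "vstk s" "tape x ! i = Sym l"
  shows "F (x, i, q, s) = (x, Suc i, opr (lop q l) q s)"
  using assms lop_range[of q l]
  by (cases rule: vstk_cases[OF assms(2)]) (auto simp: F_def nxt_def opr_def)

lemma rep_last: "last (Z0 # replicate n (TS 0)) = (if n = 0 then Z0 else TS 0)"
  by (induction n) auto

lemma butlast_rep: "butlast (replicate (Suc n) y) = replicate n y"
  by (induction n) auto

lemma rep_butlast: "butlast (Z0 # replicate (Suc n) (TS 0)) = Z0 # replicate n (TS 0)"
  by (induction n) auto

lemma rep_snoc: "Z0 # replicate n (TS 0) @ [TS 0] = Z0 # replicate (Suc n) (TS 0)"
  by (simp add: replicate_append_same)

lemma opr_cfg:
  assumes "k < 4"
  shows "opr (lop (fst (cfg k w)) l) (fst (cfg k w)) (snd (cfg k w)) = cfg k (w @ [l])"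
proof (cases "k = 3")
  case True then show ?thesis by (simp add: cfg_def opr_def lop_def)
next
  case False
  then have k3: "k < 3" using assms by simp
  have vs: "val k (w @ [l]) = val k w + lop (fst (cfg k w)) l" by (rule val_snoc[OF k3])
  consider "lop (fst (cfg k w)) l = 0" | "lop (fst (cfg k w)) l = 1" | "lop (fst (cfg k w)) l = -1"
    using lop_range by blast
  then show ?thesis
  proof cases
    case 1 then show ?thesis using vs k3 by (auto simp: cfg_def opr_def)
  next
    case 2
    show ?thesis
    proof (cases "val k w \<ge> 0")
      case True
      then show ?thesis using vs k3 2
        by (auto simp: cfg_def opr_def rep_snoc Suc_nat_eq_nat_zadd1 add.commute)
    next
      case False
      show ?thesis
      proof (cases "val k w = -1")
        case True
        then show ?thesis using vs k3 2 by (auto simp: cfg_def opr_def rep_last)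
      next
        case F2: False
        have "nat (- val k w - 1) > 0" using False F2 by linarith
        then obtain n where n: "nat (- val k w - 1) = Suc n" using gr0_implies_Suc by blast
        have c1: "cfg k w = (2 * k + 1, Z0 # replicate (Suc n) (TS 0))" using n False k3 by (simp add: cfg_def)
        have c2: "cfg k (w @ [l]) = (2 * k + 1, Z0 # replicate n (TS 0))"
          using n False F2 k3 vs 2 by (simp add: cfg_def)
        show ?thesis unfolding c1 c2 using 2 c1 by (simp add: opr_def rep_last rep_butlast butlast_rep del: replicate_Suc)
      qed
    qed
  next
    case 3
    show ?thesis
    proof (cases "val k w < 0")
      case True
      have "nat (- (val k w - 1) - 1) = Suc (nat (- val k w - 1))" using True by linarith
      then show ?thesis using vs k3 3 True
        by (auto simp: cfg_def opr_def rep_snoc)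
    next
      case False
      show ?thesis
      proof (cases "val k w = 0")
        case True
        then show ?thesis using vs k3 3 by (auto simp: cfg_def opr_def rep_last)
      next
        case F2: False
        have "nat (val k w) > 0" using False F2 by linarith
        then obtain n where n: "nat (val k w) = Suc n" using gr0_implies_Suc by blast
        have c1: "cfg k w = (2 * k, Z0 # replicate (Suc n) (TS 0))" using n False k3 by (simp add: cfg_def)
        have c2: "cfg k (w @ [l]) = (2 * k, Z0 # replicate n (TS 0))"
          using n False F2 k3 vs 3 by (simp add: cfg_def)
        show ?thesis unfolding c1 c2 using 3 c1 by (simp add: opr_def rep_last rep_butlast butlast_rep del: replicate_Suc)
      qed
    qed
  qed
qed

lemma step_cfg:
  assumes "k < 4" "0 < i" "i \<le> length x"
  shows "F (x, i, cfg k (take (i - 1) x)) = (x, Suc i, cfg k (take i x))"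
proof -
  have t: "tape x ! i = Sym (x ! (i - 1))" using assms by (simp add: tape_nth)
  have tk: "take (i - 1) x @ [x ! (i - 1)] = take i x" using assms
    by (metis Suc_diff_1 Suc_le_lessD diff_less less_imp_diff_less take_Suc_conv_app_nth zero_less_one)
  obtain q s where qs: "cfg k (take (i - 1) x) = (q, s)" by fastforce
  have "F (x, i, q, s) = (x, Suc i, opr (lop q (x ! (i - 1))) q s)"
    using F_R_sym[OF _ _ t] cfg_props[OF assms(1), of "take (i - 1) x"] qs by auto
  also have "\<dots> = (x, Suc i, cfg k (take i x))"
    using opr_cfg[OF assms(1), of "take (i - 1) x" "x ! (i - 1)"] qs tk by simp
  finally show ?thesis using qs by simp
qed



definition vecof :: "(nat \<Rightarrow> config) \<Rightarrow> (nat \<Rightarrow> complex) \<Rightarrow> config \<Rightarrow> complex" where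
  "vecof cs \<alpha> = (\<lambda>d. \<Sum>k<4. if d = cs k then \<alpha> k else 0)"

lemma vec_at: "inj_on cs {..<4} \<Longrightarrow> k < 4 \<Longrightarrow> vecof cs \<alpha> (cs k) = \<alpha> k"
proof -
  assume i: "inj_on cs {..<4}" and k: "k < 4"
  have "(\<Sum>j<4. if cs k = cs j then \<alpha> j else 0) = (\<Sum>j<4. if j = k then \<alpha> j else 0)"
    by (rule sum.cong) (use i k in \<open>auto simp: inj_on_def\<close>)
  then show ?thesis using k by (simp add: vecof_def)
qed

lemma vec_out: "d \<notin> cs ` {..<4} \<Longrightarrow> vecof cs \<alpha> d = 0"
  unfolding vecof_def by (rule sum.neutral) auto

lemma vec_nz: "vecof cs \<alpha> d \<noteq> 0 \<Longrightarrow> d \<in> cs ` {..<4}"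
  using vec_out by blast

lemma supp_vec: "supp_v (vecof cs \<alpha>) \<subseteq> cs ` {..<4}"
  unfolding supp_v_def using vec_out by blast

lemma applyU_vec:
  assumes i: "inj_on cs {..<4}" and c: "\<And>k. k < 4 \<Longrightarrow> cs k \<in> Conf A0 \<and> \<not> blk (cs k)"
  shows "applyU A0 (vecof cs \<alpha>) = vecof (F \<circ> cs) \<alpha>"
proof
  fix d
  have "applyU A0 (vecof cs \<alpha>) d = (\<Sum>e\<in>supp_v (vecof cs \<alpha>). vecof cs \<alpha> e * amp A0 e d)"
    by (simp add: applyU_def)
  also have "\<dots> = (\<Sum>e\<in>cs ` {..<4}. vecof cs \<alpha> e * amp A0 e d)"
    by (rule sum.mono_neutral_left) (auto simp: supp_v_def dest: vec_nz)
  also have "\<dots> = (\<Sum>k<4. vecof cs \<alpha> (cs k) * amp A0 (cs k) d)"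
    by (simp add: sum.reindex[OF i])
  also have "\<dots> = (\<Sum>k<4. if d = F (cs k) then \<alpha> k else 0)"
    by (rule sum.cong) (use vec_at[OF i] amp_nonblk c in auto)
  finally show "applyU A0 (vecof cs \<alpha>) d = vecof (F \<circ> cs) \<alpha> d" by (simp add: vecof_def)
qed

lemma proj_vec: "proj P (vecof cs \<alpha>) = vecof cs (\<lambda>k. if P (fst (snd (snd (cs k)))) then \<alpha> k else 0)"
proof
  fix d :: config
  obtain x i q s where d: "d = (x, i, q, s)" by (cases d) auto
  show "proj P (vecof cs \<alpha>) d = vecof cs (\<lambda>k. if P (fst (snd (snd (cs k)))) then \<alpha> k else 0) d"
  proof -
    have h: "\<And>k. (x, i, q, s) = cs k \<Longrightarrow> fst (snd (snd (cs k))) = q" by (metis fst_conv snd_conv)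
    show ?thesis unfolding d proj_def vecof_def using h by (auto intro!: sum.cong sum.neutral)
  qed
qed

lemma sqnorm_vec:
  assumes i: "inj_on cs {..<4}"
  shows "sqnorm (vecof cs \<alpha>) = (\<Sum>k<4. (cmod (\<alpha> k))\<^sup>2)"
proof -
  have "sqnorm (vecof cs \<alpha>) = (\<Sum>e\<in>cs ` {..<4}. (cmod (vecof cs \<alpha> e))\<^sup>2)"
    unfolding sqnorm_def by (rule sum.mono_neutral_left) (auto simp: supp_v_def dest: vec_nz)
  also have "\<dots> = (\<Sum>k<4. (cmod (\<alpha> k))\<^sup>2)"
    by (simp add: sum.reindex[OF i] vec_at[OF i])
  finally show ?thesis .
qed

lemma vec_zero: "(\<And>k. k < 4 \<Longrightarrow> \<alpha> k = 0) \<Longrightarrow> vecof cs \<alpha> = (\<lambda>_. 0)"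
  unfolding vecof_def by (auto intro!: ext sum.neutral)

lemma applyU_zero: "applyU A (\<lambda>_. 0) = (\<lambda>_. 0)"
  by (simp add: applyU_def supp_v_def)

lemma proj_zero: "proj P (\<lambda>_. 0) = (\<lambda>_. 0)"
  by (auto simp: proj_def)

lemma sqnorm_zero: "sqnorm (\<lambda>_. 0) = 0"
  by (simp add: sqnorm_def supp_v_def)



definition uu :: "nat \<Rightarrow> real" where
  "uu k = (if k = 0 then 14/31 else if k = 1 then 14/31 else if k = 2 then 20/31 else 13/31)"

definition al :: "nat \<Rightarrow> complex" where "al k = complex_of_real (uu k)"

definition cs :: "abc list \<Rightarrow> nat \<Rightarrow> nat \<Rightarrow> config" where
  "cs x m k = (x, m, cfg k (take (m - 1) x))"

lemma sum4: "(\<Sum>k<(4::nat). g k) = g 0 + g 1 + g 2 + (g 3 :: 'a :: comm_monoid_add)"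
  by (simp add: eval_nat_numeral add.assoc)

lemma cs_inj: "inj_on (cs x m) {..<4}"
proof (rule inj_onI)
  fix k j assume "k \<in> {..<4}" "j \<in> {..<4}" "cs x m k = cs x m j"
  then have "fst (cfg k (take (m - 1) x)) div 2 = fst (cfg j (take (m - 1) x)) div 2" "k < 4" "j < 4"
    by (auto simp: cs_def)
  then show "k = j" using cfg_props by metis
qed

lemma cs_conf: "k < 4 \<Longrightarrow> m < length x + 2 \<Longrightarrow> 0 < m \<Longrightarrow> cs x m k \<in> Conf A0 \<and> \<not> blk (cs x m k)"
  using cfg_props[of k "take (m - 1) x"] by (auto simp: cs_def Conf_A0 blk_def)

lemma cs_state: "k < 4 \<Longrightarrow> fst (snd (snd (cs x m k))) < 7"
  using cfg_props by (simp add: cs_def)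

lemma vecof_cong: "(\<And>k. k < 4 \<Longrightarrow> cs1 k = cs2 k) \<Longrightarrow> vecof cs1 \<alpha> = vecof cs2 \<alpha>"
  unfolding vecof_def by (auto intro!: ext sum.cong)

lemma vecof_cong2: "(\<And>k. k < 4 \<Longrightarrow> \<alpha> k = \<beta> k) \<Longrightarrow> vecof cs1 \<alpha> = vecof cs1 \<beta>"
  unfolding vecof_def by (auto intro!: ext sum.cong)

lemma proj_nh_cs: "proj (\<lambda>q. q \<notin> Qa A0 \<and> q \<notin> Qr A0) (vecof (cs x m) al) = vecof (cs x m) al"
  unfolding proj_vec
proof (rule vecof_cong2)
  fix k :: nat assume "k < 4"
  then have "fst (snd (snd (cs x m k))) < 7" by (rule cs_state)
  then show "(if fst (snd (snd (cs x m k))) \<notin> Qa A0 \<and> fst (snd (snd (cs x m k))) \<notin> Qr A0 then al k else 0) = al k"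
    by auto
qed

lemma proj_acc_cs: "proj (\<lambda>q. q \<in> Qa A0) (vecof (cs x m) al) = (\<lambda>_. 0)"
  unfolding proj_vec
proof (rule vec_zero)
  fix k :: nat assume "k < 4"
  then have "fst (snd (snd (cs x m k))) < 7" by (rule cs_state)
  then show "(if fst (snd (snd (cs x m k))) \<in> Qa A0 then al k else 0) = 0"
    by auto
qed

lemma applyU_init: "applyU A0 (init_vec A0 x) = vecof (cs x 1) al"
proof
  fix d :: config
  obtain x' i' q' s' where d: "d = (x', i', q', s')" by (cases d) auto
  have supp: "supp_v (init_vec A0 x) = {(x, 0, 0, [Z0])}"
    by (auto simp: supp_v_def init_vec_def)
  have "applyU A0 (init_vec A0 x) d = amp A0 (x, 0, 0, [Z0]) d"
    unfolding applyU_def supp by (simp add: init_vec_def)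
  also have "\<dots> = (if x' = x \<and> i' = 1 \<and> q' \<in> starts \<and> s' = [Z0] then complex_of_real (hq 0 q') else 0)"
    unfolding d by (rule amp_blk) (simp add: starts_def)
  also have "\<dots> = vecof (cs x 1) al d"
    unfolding d vecof_def cs_def al_def
    by (simp add: sum4 cfg_def val_def starts_def hq_def nn_def uu_def)
  finally show "applyU A0 (init_vec A0 x) d = vecof (cs x 1) al d" .
qed

lemma step_cs: "1 \<le> m \<Longrightarrow> m \<le> length x \<Longrightarrow> applyU A0 (vecof (cs x m) al) = vecof (cs x (Suc m)) al"
proof -
  assume m: "1 \<le> m" "m \<le> length x"
  have "applyU A0 (vecof (cs x m) al) = vecof (F \<circ> cs x m) al"
    by (rule applyU_vec[OF cs_inj]) (use cs_conf m in auto)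
  also have "\<dots> = vecof (cs x (Suc m)) al"
    by (rule vecof_cong) (use step_cfg m in \<open>auto simp: cs_def\<close>)
  finally show ?thesis .
qed

lemma U_run: "m \<le> length x \<Longrightarrow> applyU A0 (run_vec A0 x m) = vecof (cs x (Suc m)) al"
proof (induction m)
  case 0 then show ?case by (simp add: applyU_init)
next
  case (Suc m)
  have "run_vec A0 x (Suc m) = proj (\<lambda>q. q \<notin> Qa A0 \<and> q \<notin> Qr A0) (applyU A0 (run_vec A0 x m))"
    by (rule run_vec.simps(2))
  also have "\<dots> = vecof (cs x (Suc m)) al"
    using Suc by (simp only: proj_nh_cs Suc_leD)
  finally have "run_vec A0 x (Suc m) = vecof (cs x (Suc m)) al" .
  then show ?case using step_cs[of "Suc m" x] Suc.prems by simp
qed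



definition accb :: "nat \<Rightarrow> abc list \<Rightarrow> bool" where
  "accb k x \<longleftrightarrow> (k = 0 \<and> val 0 x = 0) \<or> (k = 1 \<and> val 1 x = 0) \<or> (k = 2 \<and> val 2 x \<noteq> 0)"

lemma F_fin:
  assumes "q < 7" "vstk s"
  shows "fst (snd (snd (F (x, Suc (length x), q, s)))) = (if last s = TS 0 then q + 21 else q + 14)"
  using assms by (cases rule: vstk_cases[OF assms(2)]) (auto simp: F_def nxt_def tape_nth)

lemma cfg_last: "k < 3 \<Longrightarrow> (if last (snd (cfg k x)) = TS 0 then fst (cfg k x) + 21 else fst (cfg k x) + 14) =
   (if val k x = 0 then 2 * k + 14 else if val k x > 0 then 2 * k + 21 else if val k x = -1 then 2 * k + 15 else 2 * k + 22)"
proof -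
  assume k: "k < 3"
  consider "val k x = 0" | "val k x > 0" | "val k x = -1" | "val k x < -1" by linarith
  then show ?thesis
  proof cases
    case 1 then show ?thesis using k by (simp add: cfg_def)
  next
    case 2
    then have "nat (val k x) \<noteq> 0" by simp
    then show ?thesis using 2 k by (simp add: cfg_def rep_last)
  next
    case 3 then show ?thesis using k by (simp add: cfg_def)
  next
    case 4
    then have "nat (- val k x - 1) \<noteq> 0" by simp
    then show ?thesis using 4 k by (simp add: cfg_def rep_last)
  qed
qed

lemma fin_cls:
  assumes k: "k < 4"
  shows "(fst (snd (snd (F (cs x (Suc (length x)) k)))) \<in> Qa A0 \<longleftrightarrow> accb k x) \<and>
         (fst (snd (snd (F (cs x (Suc (length x)) k)))) \<in> Qr A0 \<longleftrightarrow> \<not> accb k x)"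
proof -
  obtain q s where qs: "cfg k x = (q, s)" by fastforce
  have p: "q < 7" "vstk s" using cfg_props[OF k, of x] qs by auto
  have e: "fst (snd (snd (F (cs x (Suc (length x)) k)))) = (if last s = TS 0 then q + 21 else q + 14)"
    using F_fin[OF p] qs by (simp add: cs_def)
  show ?thesis
  proof (cases "k = 3")
    case True
    then have "q = 6" "s = [Z0]" using qs by (auto simp: cfg_def)
    then show ?thesis using e True by (simp add: accb_def)
  next
    case False
    then have k3: "k < 3" using k by simp
    have e2: "fst (snd (snd (F (cs x (Suc (length x)) k)))) =
      (if val k x = 0 then 2 * k + 14 else if val k x > 0 then 2 * k + 21 else if val k x = -1 then 2 * k + 15 else 2 * k + 22)"
      using cfg_last[OF k3, of x] unfolding e qs fst_conv snd_conv .
    consider "k = 0" | "k = 1" | "k = 2" using k3 by linarith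
    then show ?thesis
    proof cases
      case 1 then show ?thesis unfolding e2 by (simp add: accb_def)
    next
      case 2 then show ?thesis unfolding e2 by (simp add: accb_def)
    next
      case 3 then show ?thesis unfolding e2 by (simp add: accb_def)
    qed
  qed
qed



lemma Fcs_inj: "inj_on (F \<circ> cs x (Suc (length x))) {..<4}"
proof (rule comp_inj_on[OF cs_inj])
  have "cs x (Suc (length x)) ` {..<4} \<subseteq> Conf A0" using cs_conf by auto
  then show "inj_on F (cs x (Suc (length x)) ` {..<4})"
    using bij_betw_imp_inj_on[OF bij_F] inj_on_subset by blast
qed

lemma Phi_eq: "applyU A0 (run_vec A0 x (Suc (length x))) = vecof (F \<circ> cs x (Suc (length x))) al"
proof -
  have "run_vec A0 x (Suc (length x)) = proj (\<lambda>q. q \<notin> Qa A0 \<and> q \<notin> Qr A0) (applyU A0 (run_vec A0 x (length x)))"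
    by (rule run_vec.simps(2))
  also have "\<dots> = vecof (cs x (Suc (length x))) al"
    by (simp only: U_run[OF order_refl] proj_nh_cs)
  finally show ?thesis
    by (simp only:) (rule applyU_vec[OF cs_inj], use cs_conf in auto)
qed

lemma run_zero: "n \<ge> Suc (Suc (length x)) \<Longrightarrow> run_vec A0 x n = (\<lambda>_. 0)"
proof (induction n)
  case 0 then show ?case by simp
next
  case (Suc n)
  show ?case
  proof (cases "n = Suc (length x)")
    case True
    have "run_vec A0 x (Suc n) = proj (\<lambda>q. q \<notin> Qa A0 \<and> q \<notin> Qr A0) (applyU A0 (run_vec A0 x n))"
      by (rule run_vec.simps(2))
    also have "\<dots> = proj (\<lambda>q. q \<notin> Qa A0 \<and> q \<notin> Qr A0) (vecof (F \<circ> cs x (Suc (length x))) al)"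
      using True Phi_eq by simp
    also have "\<dots> = (\<lambda>_. 0)"
      unfolding proj_vec by (rule vec_zero) (use fin_cls in auto)
    finally show ?thesis .
  next
    case False
    then have "run_vec A0 x n = (\<lambda>_. 0)" using Suc by simp
    then show ?thesis by (simp add: applyU_zero proj_zero del: A0_simps)
  qed
qed

lemma prob_single:
  fixes P :: "nat \<Rightarrow> bool"
  assumes pz: "\<And>m. proj P (vecof (cs x m) al) = (\<lambda>_. 0)"
  shows "(\<Sum>n. sqnorm (proj P (applyU A0 (run_vec A0 x n)))) =
          sqnorm (proj P (applyU A0 (run_vec A0 x (Suc (length x)))))"
proof -
  have "(\<Sum>n. sqnorm (proj P (applyU A0 (run_vec A0 x n)))) =
        (\<Sum>n\<in>{Suc (length x)}. sqnorm (proj P (applyU A0 (run_vec A0 x n))))"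
  proof (rule suminf_finite)
    fix n assume "n \<notin> {Suc (length x)}"
    then have "n \<noteq> Suc (length x)" by simp
    then consider "n \<le> length x" | "n \<ge> Suc (Suc (length x))" by linarith
    then show "sqnorm (proj P (applyU A0 (run_vec A0 x n))) = 0"
    proof cases
      case 1 then show ?thesis using pz by (simp add: U_run sqnorm_zero)
    next
      case 2 then show ?thesis by (simp add: run_zero applyU_zero proj_zero sqnorm_zero del: A0_simps)
    qed
  qed simp
  then show ?thesis by simp
qed

lemma acc_eq: "acc_prob A0 x = (\<Sum>k<4. if accb k x then (uu k)\<^sup>2 else 0)"
proof -
  have "acc_prob A0 x = sqnorm (proj (\<lambda>q. q \<in> Qa A0) (applyU A0 (run_vec A0 x (Suc (length x)))))"
    unfolding acc_prob_def by (rule prob_single) (rule proj_acc_cs)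
  also have "\<dots> = (\<Sum>k<4. (cmod (if fst (snd (snd ((F \<circ> cs x (Suc (length x))) k))) \<in> Qa A0 then al k else 0))\<^sup>2)"
    by (simp only: Phi_eq proj_vec sqnorm_vec[OF Fcs_inj])
  also have "\<dots> = (\<Sum>k<4. if accb k x then (uu k)\<^sup>2 else 0)"
    by (rule sum.cong) (use fin_cls in \<open>auto simp: al_def\<close>)
  finally show ?thesis .
qed



lemma proj_rej_cs: "proj (\<lambda>q. q \<in> Qr A0) (vecof (cs x m) al) = (\<lambda>_. 0)"
  unfolding proj_vec
proof (rule vec_zero)
  fix k :: nat assume "k < 4"
  then have "fst (snd (snd (cs x m k))) < 7" by (rule cs_state)
  then show "(if fst (snd (snd (cs x m k))) \<in> Qr A0 then al k else 0) = 0"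
    by auto
qed

lemma rej_eq: "rej_prob A0 x = (\<Sum>k<4. if \<not> accb k x then (uu k)\<^sup>2 else 0)"
proof -
  have "rej_prob A0 x = sqnorm (proj (\<lambda>q. q \<in> Qr A0) (applyU A0 (run_vec A0 x (Suc (length x)))))"
    unfolding rej_prob_def by (rule prob_single) (rule proj_rej_cs)
  also have "\<dots> = (\<Sum>k<4. (cmod (if fst (snd (snd ((F \<circ> cs x (Suc (length x))) k))) \<in> Qr A0 then al k else 0))\<^sup>2)"
    by (simp only: Phi_eq proj_vec sqnorm_vec[OF Fcs_inj])
  also have "\<dots> = (\<Sum>k<4. if \<not> accb k x then (uu k)\<^sup>2 else 0)"
    by (rule sum.cong) (use fin_cls in \<open>auto simp: al_def\<close>)
  finally show ?thesis .
qed

theorem theorem5: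
  shows "\<exists>A. is_QPA A \<and>
           (\<forall>x. x \<in> L5 \<longrightarrow> acc_prob A x \<ge> 4/7) \<and>
           (\<forall>x. x \<notin> L5 \<longrightarrow> rej_prob A x \<ge> 4/7)"
proof (intro exI conjI allI impI)
  show "is_QPA A0" by (rule isQPA_A0)
next
  fix x assume x: "x \<in> L5"
  have v: "(val 0 x = 0) \<noteq> (val 1 x = 0)" using x by (simp add: L5_def val_def)
  have "acc_prob A0 x = (\<Sum>k<4. if accb k x then (uu k)\<^sup>2 else 0)" by (rule acc_eq)
  also have "\<dots> = (if val 0 x = 0 then (14/31)\<^sup>2 else 0) + (if val 1 x = 0 then (14/31)\<^sup>2 else 0)
                 + (if val 2 x \<noteq> 0 then (20/31)\<^sup>2 else 0)"
    by (simp add: sum4 accb_def uu_def)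
  also have "\<dots> \<ge> 4/7"
    using v by (auto simp: val_def power2_eq_square)
  finally show "acc_prob A0 x \<ge> 4/7" .
next
  fix x assume x: "x \<notin> L5"
  have v: "(val 0 x = 0) = (val 1 x = 0)" using x by (simp add: L5_def val_def)
  have "rej_prob A0 x = (\<Sum>k<4. if \<not> accb k x then (uu k)\<^sup>2 else 0)" by (rule rej_eq)
  also have "\<dots> = (if val 0 x \<noteq> 0 then (14/31)\<^sup>2 else 0) + (if val 1 x \<noteq> 0 then (14/31)\<^sup>2 else 0)
                 + (if val 2 x = 0 then (20/31)\<^sup>2 else 0) + (13/31)\<^sup>2"
    by (simp add: sum4 accb_def uu_def)
  also have "\<dots> \<ge> 4/7"
    using v by (auto simp: val_def power2_eq_square)
  finally show "rej_prob A0 x \<ge> 4/7" .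
qed


end
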